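(* Let $n\ge1$, $k\ge1$, $A\in\{1,\dots,n\}^k$ and $B\subset\{1,\dots,n\}$ with $|B|=k+1$. Let $\tilde A=c^{1-\rho(A,B)}A$, $\tilde B=c^{1-\rho(A,B)}B$, let $I=(i_1\le\dots\le i_k)$ be the non-decreasing rearrangement of $\tilde A$, and $(j_1,\dots,j_k)=\Pi(I,\tilde B)$. Then $i_l<j_l$ for all $l\in\{1,\dots,k\}$.
   Context: Let $c=(1\,2\,\dots\,n)$ be the cyclic shift $x\mapsto x+1$ for $x<n$, $n\mapsto1$; it acts on sequences componentwise and on sets elementwise, and powers $c^m$ are taken with $m\in\mathbb Z$ (modulo $n$). Parking process: given $E=(e_1,\dots,e_k)\in\{1,\dots,n\}^k$ and $O\subset\{1,\dots,n\}$ with $|O|=k+1$, define $(p_1,\dots,p_k)$ by backward induction: $p_k=c^{r}(e_k)$ where $r=\min\{s\in\{1,\dots,n\}: c^s(e_k)\in O\}$, and, once $p_k,\dots,p_{l+1}$ are defined, $p_l=c^{r}(e_l)$ where $r=\min\{s\in\{1,\dots,n\}: c^s(e_l)\in O\setminus\{p_{l+1},\dots,p_k\}\}$. Write $\Pi(E,O)=(p_1,\dots,p_k)$; the unique element of $O\setminus\{p_1,\dots,p_k\}$ is the residue $\rho(E,O)$. *)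

theory Defs
  imports Main
begin

definition cyc :: "nat \<Rightarrow> nat \<Rightarrow> nat" where
  "cyc n x = (if x < n then x + 1 else 1)"

definition cycpow :: "nat \<Rightarrow> int \<Rightarrow> nat \<Rightarrow> nat" where
  "cycpow n m = cyc n ^^ nat (m mod int n)"

text \<open>Parking process: the list (e_1,...,e_k) is processed from the back;
  park n Oc (e # es) parks e after the cars es have already been parked.\<close>
fun park :: "nat \<Rightarrow> nat set \<Rightarrow> nat list \<Rightarrow> nat list" where
  "park n Oc [] = []"
| "park n Oc (e # es) =
     (let ps = park n Oc es;
          r = (LEAST s::nat. s \<in> {1..n} \<and> (cyc n ^^ s) e \<in> Oc - set ps)
      in (cyc n ^^ r) e # ps)"

definition residue :: "nat \<Rightarrow> nat list \<Rightarrow> nat set \<Rightarrow> nat" where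
  "residue n E Oc = (THE x. x \<in> Oc - set (park n Oc E))"

end

theory Submission
  imports Defs
begin

lemma mod3: "(b mod n - a mod n - c) mod n = (b - a - c) mod (n::int)"
proof -
  have "(b mod n - a mod n - c) mod n = (b mod n - (a mod n + c)) mod n" by (simp add: algebra_simps)
  also have "\<dots> = (b - (a mod n + c)) mod n" by (rule mod_diff_left_eq)
  also have "\<dots> = ((b - c) - a mod n) mod n" by (simp add: algebra_simps)
  also have "\<dots> = ((b - c) - a) mod n" by (rule mod_diff_right_eq)
  finally show ?thesis by (simp add: algebra_simps)
qed

definition dd :: "nat \<Rightarrow> nat \<Rightarrow> nat \<Rightarrow> int" where
  "dd n e z = (int z - int e - 1) mod int n + 1"

lemma cyc_pow_int:
  assumes "x \<in> {1..n}"
  shows "int ((cyc n ^^ s) x) = (int x - 1 + int s) mod int n + 1"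
proof (induction s)
  case 0
  then show ?case using assms by simp
next
  case (Suc s)
  have n: "n \<ge> 1" using assms by simp
  let ?m = "(int x - 1 + int s) mod int n"
  have r: "0 \<le> ?m" "?m < int n" using n by auto
  have "int ((cyc n ^^ Suc s) x) = int (cyc n ((cyc n ^^ s) x))" by simp
  also have "\<dots> = (if ?m + 1 < int n then ?m + 2 else 1)"
  proof -
    define y where "y = (cyc n ^^ s) x"
    have y: "int y = ?m + 1" using Suc y_def by simp
    have "(y < n) = (?m + 1 < int n)" using y by linarith
    then show ?thesis using y unfolding y_def[symmetric] cyc_def by auto
  qed
  also have "\<dots> = (int x - 1 + int (Suc s)) mod int n + 1"
  proof -
    have e: "(int x - 1 + int (Suc s)) mod int n = (?m + 1) mod int n"
      by (simp add: mod_simps add.assoc)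
    show ?thesis
    proof (cases "?m + 1 < int n")
      case True
      then show ?thesis unfolding e using r by simp
    next
      case False
      then have "?m + 1 = int n" using r by simp
      then show ?thesis unfolding e using False by simp
    qed
  qed
  finally show ?case .
qed

lemma cyc_pow_range:
  assumes "x \<in> {1..n}" shows "(cyc n ^^ s) x \<in> {1..n}"
proof -
  have n: "n \<ge> 1" using assms by simp
  have "int ((cyc n ^^ s) x) \<ge> 1" "int ((cyc n ^^ s) x) \<le> int n"
    using cyc_pow_int[OF assms, of s] n
    by (simp_all add: add1_zle_eq pos_mod_bound)
  then show ?thesis by auto
qed

lemma dd_range: "n \<ge> 1 \<Longrightarrow> 1 \<le> dd n e z \<and> dd n e z \<le> int n"
  unfolding dd_def by (simp add: add1_zle_eq)

lemma pow_dd: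
  assumes "e \<in> {1..n}" "z \<in> {1..n}"
  shows "(cyc n ^^ nat (dd n e z)) e = z"
proof -
  have n: "n \<ge> 1" using assms by simp
  have d: "dd n e z \<ge> 1" using dd_range[OF n] by simp
  have "int ((cyc n ^^ nat (dd n e z)) e) = (int e - 1 + dd n e z) mod int n + 1"
    using cyc_pow_int[OF assms(1)] d by simp
  also have "(int e - 1 + dd n e z) mod int n = (int z - 1) mod int n"
    unfolding dd_def by (simp add: mod_simps algebra_simps)
  also have "\<dots> = int z - 1" using assms by simp
  finally show ?thesis by simp
qed

lemma dd_pow:
  assumes "e \<in> {1..n}" "s \<in> {1..n}"
  shows "dd n e ((cyc n ^^ s) e) = int s"
proof -
  have "dd n e ((cyc n ^^ s) e) = ((int e - 1 + int s) mod int n - int e) mod int n + 1"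
    unfolding dd_def using cyc_pow_int[OF assms(1)] by simp
  also have "((int e - 1 + int s) mod int n - int e) mod int n = (int s - 1) mod int n"
    by (simp add: mod_simps algebra_simps)
  also have "\<dots> = int s - 1" using assms by simp
  finally show ?thesis by simp
qed

lemma dd_inj:
  assumes "e \<in> {1..n}" "z \<in> {1..n}" "w \<in> {1..n}" "dd n e z = dd n e w"
  shows "z = w"
  using pow_dd[OF assms(1,2)] pow_dd[OF assms(1,3)] assms(4) by metis

lemma dd_shift:
  assumes "dd n e x < dd n e z" "n \<ge> 1"
  shows "dd n x z = dd n e z - dd n e x"
proof -
  define a where "a = (int x - int e - 1) mod int n"
  define b where "b = (int z - int e - 1) mod int n"
  have ab: "0 \<le> a" "a < b" "b < int n" using assms unfolding a_def b_def dd_def by auto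
  have "(int z - int x - 1) mod int n = (b - a - 1) mod int n"
    unfolding a_def b_def mod3 by (simp add: algebra_simps)
  also have "\<dots> = b - a - 1" using ab by simp
  finally show ?thesis unfolding dd_def a_def b_def by simp
qed

lemma dd_trans_inv:
  assumes "e \<in> {1..n}" "z \<in> {1..n}"
  shows "dd n ((cyc n ^^ m) e) ((cyc n ^^ m) z) = dd n e z"
proof -
  have "((int z - 1 + int m) mod int n + 1 - ((int e - 1 + int m) mod int n + 1) - 1) mod int n
      = ((int z - 1 + int m) mod int n - (int e - 1 + int m) mod int n - 1) mod int n"
    by (simp add: algebra_simps)
  also have "\<dots> = (int z - int e - 1) mod int n" unfolding mod3 by (simp add: algebra_simps)
  finally show ?thesis unfolding dd_def cyc_pow_int[OF assms(1)] cyc_pow_int[OF assms(2)] by simp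
qed


definition nf :: "nat \<Rightarrow> nat set \<Rightarrow> nat set \<Rightarrow> nat \<Rightarrow> nat" where
  "nf n Oc S e = (cyc n ^^ (LEAST s::nat. s \<in> {1..n} \<and> (cyc n ^^ s) e \<in> Oc - S)) e"

lemma park_Cons: "park n Oc (e # es) = nf n Oc (set (park n Oc es)) e # park n Oc es"
  by (simp add: Let_def nf_def)

declare park.simps(2)[simp del]

lemma nf_props:
  assumes "Oc \<subseteq> {1..n}" "e \<in> {1..n}" "Oc - S \<noteq> {}"
  shows "nf n Oc S e \<in> Oc - S \<and> (\<forall>w\<in>Oc - S. dd n e (nf n Oc S e) \<le> dd n e w)"
proof -
  have n: "n \<ge> 1" using assms(2) by simp
  let ?P = "\<lambda>s. s \<in> {1..n} \<and> (cyc n ^^ s) e \<in> Oc - S"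
  obtain w where w: "w \<in> Oc - S" using assms(3) by blast
  have Pw: "\<And>w. w \<in> Oc - S \<Longrightarrow> ?P (nat (dd n e w))"
  proof -
    fix w assume "w \<in> Oc - S"
    then show "?P (nat (dd n e w))"
      using pow_dd[OF assms(2), of w] assms(1) dd_range[OF n, of e w] by auto
  qed
  define s0 where "s0 = (LEAST s. ?P s)"
  have P0: "?P s0" unfolding s0_def using Pw[OF w] by (rule LeastI)
  have le: "\<And>w. w \<in> Oc - S \<Longrightarrow> s0 \<le> nat (dd n e w)"
    unfolding s0_def using Pw by (rule Least_le)
  have nfe: "nf n Oc S e = (cyc n ^^ s0) e" unfolding nf_def s0_def by simp
  have d0: "dd n e (nf n Oc S e) = int s0" unfolding nfe using dd_pow[OF assms(2)] P0 by simp
  show ?thesis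
  proof
    show "nf n Oc S e \<in> Oc - S" using P0 nfe by simp
    show "\<forall>w\<in>Oc - S. dd n e (nf n Oc S e) \<le> dd n e w"
    proof
      fix w assume "w \<in> Oc - S"
      then have "s0 \<le> nat (dd n e w)" by (rule le)
      then show "dd n e (nf n Oc S e) \<le> dd n e w" using d0 dd_range[OF n, of e w] by linarith
    qed
  qed
qed

lemma nf_unique:
  assumes "Oc \<subseteq> {1..n}" "e \<in> {1..n}" "z \<in> Oc - S" "\<forall>w\<in>Oc - S. dd n e z \<le> dd n e w"
  shows "nf n Oc S e = z"
proof -
  have ne: "Oc - S \<noteq> {}" using assms(3) by blast
  note p = nf_props[OF assms(1,2) ne]
  have "dd n e (nf n Oc S e) = dd n e z" using p assms(3,4) by force
  then show ?thesis using dd_inj[OF assms(2)] p assms(1,3) by blast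
qed

lemma park_inv:
  assumes "Oc \<subseteq> {1..n}" "set es \<subseteq> {1..n}" "length es < card Oc"
  shows "set (park n Oc es) \<subseteq> Oc \<and> distinct (park n Oc es) \<and> length (park n Oc es) = length es"
  using assms(2,3)
proof (induction es)
  case Nil
  then show ?case by simp
next
  case (Cons e es)
  let ?ps = "park n Oc es"
  have IH: "set ?ps \<subseteq> Oc" "distinct ?ps" "length ?ps = length es" using Cons by auto
  have fin: "finite Oc" using assms(1) finite_subset by blast
  have "card (set ?ps) = length es" using IH distinct_card by metis
  then have "card (Oc - set ?ps) = card Oc - length es" using IH(1) fin by (simp add: card_Diff_subset)
  then have "card (Oc - set ?ps) > 0" using Cons.prems by auto
  then have "Oc - set ?ps \<noteq> {}" by (metis card.empty less_irrefl)
  then have "nf n Oc (set ?ps) e \<in> Oc - set ?ps" using nf_props[OF assms(1)] Cons.prems by auto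
  then show ?case using IH by (simp add: park_Cons)
qed


lemma nf_after:
  assumes "Oc \<subseteq> {1..n}" "a \<in> {1..n}" "x = nf n Oc S a" "Oc - insert x S \<noteq> {}"
  shows "nf n Oc (insert x S) a = nf n Oc (insert x S) x"
proof -
  have n: "n \<ge> 1" using assms(2) by simp
  have ne: "Oc - S \<noteq> {}" using assms(4) by blast
  note px = nf_props[OF assms(1,2) ne, folded assms(3)]
  have x1: "x \<in> {1..n}" using px assms(1) by blast
  define u where "u = nf n Oc (insert x S) x"
  note pu = nf_props[OF assms(1) x1 assms(4), folded u_def]
  have lt: "dd n a x < dd n a w" if w: "w \<in> Oc - insert x S" for w
  proof -
    have "dd n a x \<le> dd n a w" using px w by blast
    moreover have "dd n a x \<noteq> dd n a w"
      using dd_inj[OF assms(2) x1, of w] w assms(1) by blast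
    ultimately show ?thesis by simp
  qed
  show ?thesis unfolding u_def[symmetric]
  proof (rule nf_unique[OF assms(1,2)])
    show "u \<in> Oc - insert x S" using pu by blast
    show "\<forall>w\<in>Oc - insert x S. dd n a u \<le> dd n a w"
    proof
      fix w assume w: "w \<in> Oc - insert x S"
      have "dd n x u \<le> dd n x w" using pu w by blast
      moreover have "dd n x u = dd n a u - dd n a x" using dd_shift[OF lt n] pu by blast
      moreover have "dd n x w = dd n a w - dd n a x" using dd_shift[OF lt[OF w] n] .
      ultimately show "dd n a u \<le> dd n a w" by simp
    qed
  qed
qed

definition G :: "nat \<Rightarrow> nat set \<Rightarrow> nat \<Rightarrow> nat set \<Rightarrow> nat set" where
  "G n Oc e S = insert (nf n Oc S e) S"

lemma G_commute:
  assumes "Oc \<subseteq> {1..n}" "S \<subseteq> Oc" "card (Oc - S) \<ge> 2" "a \<in> {1..n}" "b \<in> {1..n}"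
  shows "G n Oc a (G n Oc b S) = G n Oc b (G n Oc a S)"
proof -
  have fin: "finite Oc" using assms(1) finite_subset by blast
  have ne: "Oc - S \<noteq> {}"
  proof
    assume "Oc - S = {}"
    then have "card (Oc - S) = 0" by (simp only: card.empty)
    then show False using assms(3) by simp
  qed
  define x where "x = nf n Oc S a"
  define y where "y = nf n Oc S b"
  have px: "x \<in> Oc - S" "\<forall>w\<in>Oc - S. dd n a x \<le> dd n a w"
    using nf_props[OF assms(1,4) ne] x_def by auto
  have py: "y \<in> Oc - S" "\<forall>w\<in>Oc - S. dd n b y \<le> dd n b w"
    using nf_props[OF assms(1,5) ne] y_def by auto
  have ne2: "Oc - insert z S \<noteq> {}" for z
  proof -
    have "Oc - insert z S = (Oc - S) - {z}" by blast
    moreover have "card ((Oc - S) - {z}) \<ge> 1"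
    proof -
      have "card ((Oc - S) - {z}) \<ge> card (Oc - S) - 1" using diff_card_le_card_Diff[of "{z}" "Oc - S"] fin by simp
      then show ?thesis using assms(3) by linarith
    qed
    ultimately show ?thesis by (metis card_0_eq fin finite_Diff not_one_le_zero)
  qed
  show ?thesis
  proof (cases "x = y")
    case False
    have 1: "nf n Oc (insert y S) a = x"
    proof (rule nf_unique[OF assms(1,4)])
      show "x \<in> Oc - insert y S" using px(1) False by simp
      show "\<forall>w\<in>Oc - insert y S. dd n a x \<le> dd n a w" using px(2) by simp
    qed
    have 2: "nf n Oc (insert x S) b = y"
    proof (rule nf_unique[OF assms(1,5)])
      show "y \<in> Oc - insert x S" using py(1) False by simp
      show "\<forall>w\<in>Oc - insert x S. dd n b y \<le> dd n b w" using py(2) by simp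
    qed
    show ?thesis unfolding G_def x_def[symmetric] y_def[symmetric] 1 2 by blast
  next
    case True
    have 1: "nf n Oc (insert x S) a = nf n Oc (insert x S) x"
      using nf_after[OF assms(1,4) x_def ne2] .
    have 2: "nf n Oc (insert x S) b = nf n Oc (insert x S) x"
      using nf_after[OF assms(1,5) _ ne2] True y_def by simp
    show ?thesis unfolding G_def x_def[symmetric] y_def[symmetric] True[symmetric] 1 2 by blast
  qed
qed

lemma set_park_Cons: "set (park n Oc (e # es)) = G n Oc e (set (park n Oc es))"
  by (simp add: park_Cons G_def)

lemma park_insort:
  assumes "Oc \<subseteq> {1..n}" "set ys \<subseteq> {1..n}" "x \<in> {1..n}" "length ys + 1 < card Oc"
  shows "set (park n Oc (insort x ys)) = G n Oc x (set (park n Oc ys))"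
  using assms(2,4)
proof (induction ys)
  case Nil
  then show ?case by (simp add: set_park_Cons)
next
  case (Cons y ys)
  show ?case
  proof (cases "x \<le> y")
    case True
    then show ?thesis by (simp add: set_park_Cons)
  next
    case False
    let ?S = "set (park n Oc ys)"
    have inv: "?S \<subseteq> Oc" "distinct (park n Oc ys)" "length (park n Oc ys) = length ys"
      using park_inv[OF assms(1), of ys] Cons.prems by auto
    have fin: "finite Oc" using assms(1) finite_subset by blast
    have "card ?S = length ys" using inv distinct_card by metis
    then have c: "card (Oc - ?S) \<ge> 2" using inv(1) fin Cons.prems by (simp add: card_Diff_subset)
    have "set (park n Oc (insort x (y # ys))) = G n Oc y (set (park n Oc (insort x ys)))"
      using False by (simp add: set_park_Cons)
    also have "\<dots> = G n Oc y (G n Oc x ?S)" using Cons by simp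
    also have "\<dots> = G n Oc x (G n Oc y ?S)"
      using G_commute[OF assms(1) inv(1) c] Cons.prems assms(3) by simp
    finally show ?thesis by (simp add: set_park_Cons)
  qed
qed

lemma park_sort:
  assumes "Oc \<subseteq> {1..n}" "set xs \<subseteq> {1..n}" "length xs < card Oc"
  shows "set (park n Oc (sort xs)) = set (park n Oc xs)"
  using assms(2,3)
proof (induction xs)
  case Nil
  then show ?case by simp
next
  case (Cons x xs)
  have "set (park n Oc (sort (x # xs))) = set (park n Oc (insort x (sort xs)))" by simp
  also have "\<dots> = G n Oc x (set (park n Oc (sort xs)))"
    using park_insort[OF assms(1), of "sort xs" x] Cons.prems by simp
  also have "\<dots> = G n Oc x (set (park n Oc xs))" using Cons by simp
  finally show ?case by (simp add: set_park_Cons)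
qed


lemma park_card:
  assumes "Oc \<subseteq> {1..n}" "set es \<subseteq> {1..n}" "length es < card Oc"
  shows "card (Oc - set (park n Oc es)) = card Oc - length es"
proof -
  note inv = park_inv[OF assms]
  have fin: "finite Oc" using assms(1) finite_subset by blast
  have "card (set (park n Oc es)) = length es" using inv distinct_card by metis
  then show ?thesis using inv fin by (simp add: card_Diff_subset)
qed

lemma park_free:
  assumes "Oc \<subseteq> {1..n}" "set es \<subseteq> {1..n}" "length es < card Oc"
  shows "Oc - set (park n Oc es) \<noteq> {}"
proof
  assume "Oc - set (park n Oc es) = {}"
  then have "card (Oc - set (park n Oc es)) = 0" by (simp only: card.empty)
  then show False using park_card[OF assms] assms(3) by simp
qed

lemma sh_range: "x \<in> {1..n} \<Longrightarrow> (cyc n ^^ m) x \<in> {1..n}"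
  by (rule cyc_pow_range)

lemma sh_inj: "inj_on (cyc n ^^ m) {1..n}"
proof (rule inj_onI)
  fix e z assume e: "e \<in> {1..n}" and z: "z \<in> {1..n}" and eq: "(cyc n ^^ m) e = (cyc n ^^ m) z"
  have "dd n e z = dd n ((cyc n ^^ m) e) ((cyc n ^^ m) z)" using dd_trans_inv[OF e z] by simp
  also have "\<dots> = dd n ((cyc n ^^ m) e) ((cyc n ^^ m) e)" using eq by simp
  also have "\<dots> = dd n e e" using dd_trans_inv[OF e e] by simp
  finally show "e = z" using dd_inj[OF e z e] by simp
qed

lemma park_equiv:
  assumes "Oc \<subseteq> {1..n}" "set es \<subseteq> {1..n}" "length es < card Oc"
  shows "park n ((cyc n ^^ m) ` Oc) (map (cyc n ^^ m) es) = map (cyc n ^^ m) (park n Oc es)"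
  using assms(2,3)
proof (induction es)
  case Nil
  then show ?case by simp
next
  case (Cons e es)
  let ?sh = "cyc n ^^ m"
  let ?ps = "park n Oc es"
  have IH: "park n (?sh ` Oc) (map ?sh es) = map ?sh ?ps" using Cons by simp
  have inv: "set ?ps \<subseteq> Oc" using park_inv[OF assms(1)] Cons.prems by simp
  have e: "e \<in> {1..n}" using Cons.prems by simp
  have ne: "Oc - set ?ps \<noteq> {}" using park_free[OF assms(1)] Cons.prems by simp
  define x where "x = nf n Oc (set ?ps) e"
  have px: "x \<in> Oc - set ?ps" "\<forall>w\<in>Oc - set ?ps. dd n e x \<le> dd n e w"
    using nf_props[OF assms(1) e ne] x_def by auto
  have Oc': "?sh ` Oc \<subseteq> {1..n}" using assms(1) sh_range by blast
  have inj: "inj_on ?sh {1..n}" by (rule sh_inj)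
  have key: "nf n (?sh ` Oc) (set (map ?sh ?ps)) (?sh e) = ?sh x"
  proof (rule nf_unique[OF Oc' sh_range[OF e]])
    have "?sh x \<notin> ?sh ` set ?ps"
    proof
      assume "?sh x \<in> ?sh ` set ?ps"
      then obtain y where y: "y \<in> set ?ps" "?sh x = ?sh y" by blast
      have "x = y" using inj_onD[OF inj y(2)] px(1) y(1) inv assms(1) by blast
      then show False using px(1) y(1) by simp
    qed
    then show "?sh x \<in> ?sh ` Oc - set (map ?sh ?ps)" using px(1) by simp
    show "\<forall>w\<in>?sh ` Oc - set (map ?sh ?ps). dd n (?sh e) (?sh x) \<le> dd n (?sh e) w"
    proof
      fix w' assume w': "w' \<in> ?sh ` Oc - set (map ?sh ?ps)"
      then obtain w where w: "w \<in> Oc" "w' = ?sh w" by blast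
      have "w \<notin> set ?ps" using w w' by auto
      then have "dd n e x \<le> dd n e w" using px(2) w(1) by blast
      moreover have "dd n (?sh e) (?sh x) = dd n e x"
        using dd_trans_inv[OF e] px(1) assms(1) by blast
      moreover have "dd n (?sh e) (?sh w) = dd n e w"
        using dd_trans_inv[OF e] w(1) assms(1) by blast
      ultimately show "dd n (?sh e) (?sh x) \<le> dd n (?sh e) w'" using w(2) by simp
    qed
  qed
  show ?case using key[unfolded set_map] by (simp add: park_Cons IH x_def)
qed

lemma park_nth:
  "l < length xs \<Longrightarrow> park n Oc xs ! l = nf n Oc (set (park n Oc (drop (Suc l) xs))) (xs ! l)"
proof (induction xs arbitrary: l)
  case Nil
  then show ?case by simp
next
  case (Cons x xs)
  then show ?case by (cases l) (auto simp: park_Cons)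
qed

lemma park_drop_sub: "set (park n Oc (drop m xs)) \<subseteq> set (park n Oc xs)"
proof (induction xs arbitrary: m)
  case Nil
  then show ?case by simp
next
  case (Cons x xs)
  then show ?case by (cases m) (auto simp: park_Cons)
qed

lemma park_length: "length (park n Oc xs) = length xs"
  by (induction xs) (auto simp: park_Cons)

lemma mod_neg_shift: "0 \<le> a + n \<Longrightarrow> a + n < (n::int) \<Longrightarrow> a mod n = a + n"
  by (metis mod_add_self2 mod_pos_pos_trivial)

theorem lemma5p2:
  fixes n k :: nat and A :: "nat list" and B :: "nat set"
  assumes "n \<ge> 1" and "k \<ge> 1"
    and "length A = k" and "set A \<subseteq> {1..n}"
    and "B \<subseteq> {1..n}" and "card B = k + 1"
  shows "let sh = cycpow n (1 - int (residue n A B));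
             At = map sh A; Bt = sh ` B;
             I = sort At; J = park n Bt I
         in \<forall>l < k. I ! l < J ! l"
proof -
  define P where "P = park n B A"
  have lk: "length A < card B" using assms by simp
  note inv = park_inv[OF assms(5,4) lk, folded P_def]
  have "card (B - set P) = 1" using park_card[OF assms(5,4) lk, folded P_def] assms by simp
  then obtain r0 where r0: "B - set P = {r0}" by (metis card_1_singletonE)
  define r where "r = residue n A B"
  have "r = r0" unfolding r_def residue_def P_def[symmetric] r0 by simp
  then have r: "r \<in> B" "r \<notin> set P" using r0 by auto
  have r1: "r \<in> {1..n}" using r assms(5) by blast
  define m where "m = nat ((1 - int r) mod int n)"
  define sh where "sh = cyc n ^^ m"
  have sh_def2: "cycpow n (1 - int (residue n A B)) = sh"
    unfolding sh_def m_def cycpow_def r_def by simp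
  have "int (sh r) = (int r - 1 + int m) mod int n + 1" unfolding sh_def by (rule cyc_pow_int[OF r1])
  also have "int m = (1 - int r) mod int n" unfolding m_def using assms(1) by simp
  also have "(int r - 1 + (1 - int r) mod int n) mod int n = 0" by (simp add: mod_simps)
  finally have shr: "sh r = 1" by simp
  define At where "At = map sh A"
  define Bt where "Bt = sh ` B"
  define I where "I = sort At"
  define J where "J = park n Bt I"
  have inj: "inj_on sh {1..n}" unfolding sh_def by (rule sh_inj)
  have Bt: "Bt \<subseteq> {1..n}" unfolding Bt_def sh_def using assms(5) sh_range by blast
  have cBt: "card Bt = k + 1" unfolding Bt_def using card_image[OF inj_on_subset[OF inj assms(5)]] assms(6) by simp
  have At: "set At \<subseteq> {1..n}" unfolding At_def sh_def using assms(4) sh_range by auto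
  have lAt: "length At = k" unfolding At_def using assms(3) by simp
  have I: "set I \<subseteq> {1..n}" "length I = k" unfolding I_def using At lAt by auto
  have "set J = set (park n Bt At)" unfolding J_def I_def
    by (rule park_sort[OF Bt At]) (simp add: lAt cBt)
  also have "park n Bt At = map sh P"
    unfolding Bt_def At_def sh_def P_def by (rule park_equiv[OF assms(5,4) lk])
  finally have setJ: "set J = sh ` set P" by simp
  have one_notin: "1 \<notin> set J"
  proof
    assume "1 \<in> set J"
    then obtain p where p: "p \<in> set P" "sh p = sh r" using setJ shr by auto
    have "p = r" using inj_onD[OF inj p(2)] p(1) inv r1 assms(5) by blast
    then show False using p r by simp
  qed
  have one_in: "1 \<in> Bt" unfolding Bt_def using r shr by force
  have lJ: "length J = k" unfolding J_def using I park_length by simp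
  have main: "I ! l < J ! l" if l: "l < k" for l
  proof -
    define S where "S = set (park n Bt (drop (Suc l) I))"
    have Jl: "J ! l = nf n Bt S (I ! l)" unfolding J_def S_def using park_nth I l by simp
    have SJ: "S \<subseteq> set J" unfolding S_def J_def by (rule park_drop_sub)
    have i: "I ! l \<in> {1..n}" using I l nth_mem by blast
    have one: "1 \<in> Bt - S" using one_in one_notin SJ by blast
    then have ne: "Bt - S \<noteq> {}" by blast
    note pj = nf_props[OF Bt i ne, folded Jl]
    have jJ: "J ! l \<in> set J" using lJ l by simp
    have j1: "J ! l \<noteq> 1" using jJ one_notin by metis
    have j: "J ! l \<in> {1..n}" using pj Bt by blast
    have le: "dd n (I ! l) (J ! l) \<le> dd n (I ! l) 1" using pj one by blast
    show ?thesis
    proof (rule ccontr)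
      assume "\<not> I ! l < J ! l"
      then have ji: "J ! l \<le> I ! l" by simp
      have "(int (J ! l) - int (I ! l) - 1) mod int n = int (J ! l) - int (I ! l) - 1 + int n"
        using ji j i by (intro mod_neg_shift) auto
      moreover have "(int 1 - int (I ! l) - 1) mod int n = int 1 - int (I ! l) - 1 + int n"
        using i by (intro mod_neg_shift) auto
      ultimately show False using le j1 j unfolding dd_def by simp
    qed
  qed
  show ?thesis unfolding Let_def sh_def2
    using main unfolding At_def[symmetric] Bt_def[symmetric] I_def[symmetric] J_def[symmetric] by blast
qed

end
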